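(* Let $k\geq 1$ and $\Sigma=\{a_1,\dots,a_{k+1}\}$. Let $L\subseteq(\Sigma\times D)^*$ be the set of data words $w$ such that (i) for every $j\in\{1,\dots,k+1\}$, the data values occurring in $w$ together with attribute $a_j$ are pairwise distinct (no data value occurs twice with attribute $a_j$), and (ii) the projection of $w$ onto $\Sigma$ belongs to $a_1^*a_2^*\cdots a_{k+1}^*$. Then no SAFA $M=(Q,\Sigma\times D,q_0,F,H,\delta)$ with $|H|=k$ accepts $L$.
   Context: $D$ is a fixed countably infinite set of data values; a data word over $\Sigma$ is an element of $(\Sigma\times D)^*$, and its projection onto $\Sigma$ is the word of attributes. A set augmented finite automaton (SAFA) is a tuple $M=(Q,\Sigma\times D,q_0,F,H,\delta)$: $Q$ finite set of states, $q_0\in Q$ initial, $F\subseteq Q$ final, $H=\{h_1,\dots,h_m\}$ a finite collection of (names of) sets of data values, $\delta\subseteq Q\times\Sigma\times C\times OP\times Q$ with $C=\{p(h_i),\,!p(h_i): h_i\in H\}$, $OP=\{-\}\cup\{\mathsf{ins}(h_i):h_i\in H\}$. Configurations are $(q,\langle S_1,\dots,S_m\rangle)$ with $S_i\subseteq D$ finite; initially state $q_0$ and all sets empty. On reading $(a,d)$, a transition $(q,a,\alpha,op,q')$ from the current state may be taken if $\alpha=p(h_i)$ and $d\in S_i$, or $\alpha=\,!p(h_i)$ and $d\notin S_i$; then the state becomes $q'$ and if $op=\mathsf{ins}(h_j)$ the value $d$ is added to $S_j$ ($op=-$ changes nothing). A word is accepted if some run reads it entirely and ends in $F$. *)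

theory Defs
  imports Main "HOL-Library.Countable"
begin

text \<open>Sets of data values are named by indices 0..m-1 (so H = {h_0,...,h_(m-1)}, |H| = m).\<close>

datatype cond = Mem nat | NotMem nat
datatype setop = NoOp | Ins nat

record ('q, 'a) safa =
  states :: "'q set"
  init   :: 'q
  final  :: "'q set"
  nsets  :: nat
  delta  :: "('q \<times> 'a \<times> cond \<times> setop \<times> 'q) set"

definition cond_ok :: "nat \<Rightarrow> cond \<Rightarrow> bool" where
  "cond_ok m c = (case c of Mem i \<Rightarrow> i < m | NotMem i \<Rightarrow> i < m)"

definition op_ok :: "nat \<Rightarrow> setop \<Rightarrow> bool" where
  "op_ok m p = (case p of NoOp \<Rightarrow> True | Ins i \<Rightarrow> i < m)"

definition wf_safa :: "('q, 'a) safa \<Rightarrow> 'a set \<Rightarrow> bool" where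
  "wf_safa M Sig \<longleftrightarrow> finite (states M) \<and> init M \<in> states M \<and> final M \<subseteq> states M \<and>
     (\<forall>(q, a, c, p, q') \<in> delta M. q \<in> states M \<and> a \<in> Sig \<and> cond_ok (nsets M) c
        \<and> op_ok (nsets M) p \<and> q' \<in> states M)"

definition sat :: "cond \<Rightarrow> (nat \<Rightarrow> 'd set) \<Rightarrow> 'd \<Rightarrow> bool" where
  "sat c S d = (case c of Mem i \<Rightarrow> d \<in> S i | NotMem i \<Rightarrow> d \<notin> S i)"

definition apply_op :: "setop \<Rightarrow> (nat \<Rightarrow> 'd set) \<Rightarrow> 'd \<Rightarrow> (nat \<Rightarrow> 'd set)" where
  "apply_op p S d = (case p of NoOp \<Rightarrow> S | Ins j \<Rightarrow> S(j := insert d (S j)))"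

inductive runs :: "('q, 'a) safa \<Rightarrow> 'q \<times> (nat \<Rightarrow> 'd set) \<Rightarrow> ('a \<times> 'd) list
                     \<Rightarrow> 'q \<times> (nat \<Rightarrow> 'd set) \<Rightarrow> bool" for M where
  runs_Nil: "runs M c [] c"
| runs_Cons: "\<lbrakk> (q, a, c, p, q') \<in> delta M; sat c S d;
               runs M (q', apply_op p S d) w c' \<rbrakk> \<Longrightarrow> runs M (q, S) ((a, d) # w) c'"

definition accepts :: "('q, 'a) safa \<Rightarrow> ('a \<times> 'd) list \<Rightarrow> bool" where
  "accepts M w \<longleftrightarrow> (\<exists>q S. runs M (init M, \<lambda>_. {}) w (q, S) \<and> q \<in> final M)"

definition lang :: "('q, 'a) safa \<Rightarrow> 'a set \<Rightarrow> ('a \<times> 'd) list set" where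
  "lang M Sig = {w. set (map fst w) \<subseteq> Sig \<and> accepts M w}"

text \<open>Attributes a_1,...,a_(k+1) are the naturals 1..k+1. The language L_k.\<close>
definition L :: "nat \<Rightarrow> (nat \<times> 'd) list set" where
  "L k = {w. set (map fst w) \<subseteq> {1..k+1}
            \<and> (\<forall>j \<in> {1..k+1}. distinct (map snd (filter (\<lambda>x. fst x = j) w)))
            \<and> sorted (map fst w)}"

end

theory Submission
  imports Defs "HOL-Library.FuncSet"
begin

definition step :: "('q, 'a) safa \<Rightarrow> 'q \<times> (nat \<Rightarrow> 'd set) \<Rightarrow> 'a \<times> 'd \<Rightarrow> 'q \<times> (nat \<Rightarrow> 'd set) \<Rightarrow> bool" where
  "step M c y c' \<longleftrightarrow> (\<exists>a d q S cc p q'. y = (a, d) \<and> c = (q, S) \<and> (q, a, cc, p, q') \<in> delta M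
      \<and> sat cc S d \<and> c' = (q', apply_op p S d))"

lemma runs_path:
  assumes "runs M c w c'"
  shows "\<exists>X. X 0 = c \<and> X (length w) = c' \<and> (\<forall>t<length w. step M (X t) (w!t) (X (Suc t)))"
  using assms
proof (induction rule: runs.induct)
  case (runs_Nil c)
  then show ?case by (rule_tac x="\<lambda>_. c" in exI) simp
next
  case (runs_Cons q a cc p q' S d w c')
  then obtain X where X: "X 0 = (q', apply_op p S d)" "X (length w) = c'"
    "\<forall>t<length w. step M (X t) (w!t) (X (Suc t))" by blast
  define Y where "Y t = (if t = 0 then (q, S) else X (t - 1))" for t
  have "\<forall>t<length ((a, d) # w). step M (Y t) (((a, d) # w)!t) (Y (Suc t))"
  proof (intro allI impI)
    fix t assume t: "t < length ((a, d) # w)"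
    show "step M (Y t) (((a, d) # w)!t) (Y (Suc t))"
    proof (cases t)
      case 0
      then show ?thesis using runs_Cons X unfolding Y_def step_def by auto
    next
      case (Suc s)
      then show ?thesis using t X unfolding Y_def by auto
    qed
  qed
  then show ?case using X by (rule_tac x=Y in exI) (auto simp: Y_def)
qed

lemma path_runs:
  "X 0 = c \<Longrightarrow> X (length w) = c' \<Longrightarrow> (\<forall>t<length w. step M (X t) (w!t) (X (Suc t))) \<Longrightarrow> runs M c w c'"
proof (induction w arbitrary: X c)
  case Nil
  then show ?case by (auto intro: runs_Nil)
next
  case (Cons y w)
  have "step M (X 0) y (X 1)" using Cons.prems(3) by fastforce
  then obtain a d q S cc p q' where y: "y = (a, d)" "X 0 = (q, S)" "(q, a, cc, p, q') \<in> delta M"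
    "sat cc S d" "X 1 = (q', apply_op p S d)" unfolding step_def by blast
  have "\<forall>t<length w. step M (X (Suc t)) (w!t) (X (Suc (Suc t)))" using Cons.prems(3) by auto
  then have "runs M (X 1) w c'"
    using Cons.IH[of "\<lambda>t. X (Suc t)" "X 1"] Cons.prems by auto
  then show ?case using y Cons.prems(1) by (auto intro: runs_Cons)
qed

lemma step_mono:
  assumes "step M c (a, d) c'"
  shows "snd c i \<subseteq> snd c' i \<and> snd c' i \<subseteq> snd c i \<union> {d}"
proof -
  obtain q S cc p q' where y: "c = (q, S)" "c' = (q', apply_op p S d)"
    using assms unfolding step_def by blast
  then show ?thesis unfolding apply_op_def by (cases p) auto
qed

lemma path_mono:
  assumes path: "\<forall>s<length w. step M (X s) (w!s) (X (Suc s))"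
    and "t \<le> t'"
  shows "t' \<le> length w \<Longrightarrow> snd (X t) i \<subseteq> snd (X t') i \<and>
      snd (X t') i \<subseteq> snd (X t) i \<union> {snd (w!s) | s. t \<le> s \<and> s < t'}"
  using assms(2)
proof (induction t' rule: dec_induct)
  case base
  then show ?case by auto
next
  case (step n)
  have st: "step M (X n) (fst (w!n), snd (w!n)) (X (Suc n))" using path step by auto
  from step_mono[OF st, of i] step
  have "{snd (w!s) | s. t \<le> s \<and> s < Suc n} = insert (snd (w!n)) {snd (w!s) | s. t \<le> s \<and> s < n}"
    using step by (auto simp: less_Suc_eq)
  then show ?case using step_mono[OF st, of i] step by auto
qed

lemma step_high:
  assumes "step M c y c'" "wf_safa M Sig" "nsets M \<le> i"
  shows "snd c' i = snd c i"
  using assms unfolding step_def wf_safa_def apply_op_def op_ok_def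
  by (fastforce split: setop.splits)

definition ren :: "('d \<Rightarrow> 'd) \<Rightarrow> 'q \<times> (nat \<Rightarrow> 'd set) \<Rightarrow> 'q \<times> (nat \<Rightarrow> 'd set)" where
  "ren h c = (fst c, \<lambda>i. h ` snd c i)"

definition rp :: "('d \<Rightarrow> 'd) \<Rightarrow> 'a \<times> 'd \<Rightarrow> 'a \<times> 'd" where
  "rp h y = (fst y, h (snd y))"

lemma step_ren:
  assumes "step M c y c'" "inj h"
  shows "step M (ren h c) (rp h y) (ren h c')"
proof -
  obtain a d q S cc p q' where y: "y = (a, d)" "c = (q, S)" "(q, a, cc, p, q') \<in> delta M"
    "sat cc S d" "c' = (q', apply_op p S d)" using assms(1) unfolding step_def by blast
  have "sat cc (\<lambda>i. h ` S i) (h d)" using y(4) assms(2)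
    unfolding sat_def by (auto split: cond.splits simp: inj_image_mem_iff)
  moreover have "apply_op p (\<lambda>i. h ` S i) (h d) = (\<lambda>i. h ` apply_op p S d i)"
    unfolding apply_op_def by (auto split: setop.splits simp: fun_eq_iff)
  ultimately show ?thesis using y unfolding step_def ren_def rp_def
    by (rule_tac x=a in exI, rule_tac x="h d" in exI) (metis fst_conv snd_conv)
qed

definition sw :: "'d \<Rightarrow> 'd \<Rightarrow> 'd \<Rightarrow> 'd" where
  "sw d e x = (if x = d then e else if x = e then d else x)"

lemma sw_inv: "sw d e (sw d e x) = x"
  unfolding sw_def by auto

lemma sw_inj: "inj (sw d e)"
  by (metis injI sw_inv)

lemma sw_image: "(d \<in> A \<longleftrightarrow> e \<in> A) \<Longrightarrow> sw d e ` A = A"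
  unfolding sw_def by (auto simp: image_iff)

lemma nondistinct:
  assumes "p < n" "n < length xs" "xs!p = xs!n" "P (xs!n)"
  shows "\<not> distinct (map snd (filter P xs))"
proof
  assume "distinct (map snd (filter P xs))"
  then have d: "distinct (filter P xs)" using distinct_map by blast
  have xs: "xs = take n xs @ xs!n # drop (Suc n) xs" using assms(2) by (simp add: id_take_nth_drop)
  have "xs!n \<in> set (take n xs)" using assms
    by (metis length_take min.absorb4 nth_mem nth_take order.strict_trans)
  then have "xs!n \<in> set (filter P (take n xs))" using assms(4) by simp
  moreover have "distinct (filter P (take n xs) @ xs!n # filter P (drop (Suc n) xs))"
    using d xs assms(4) by (metis filter.simps(2) filter_append)
  ultimately show False by simp
qed

lemma swap_path:
  assumes path: "\<forall>t<length w. step M (X t) (w!t) (X (Suc t))" and n: "n < length w"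
    and same: "\<forall>i. d \<in> snd (X n) i \<longleftrightarrow> e \<in> snd (X n) i"
  defines "w' \<equiv> take n w @ map (rp (sw d e)) (drop n w)"
  defines "X' \<equiv> \<lambda>t. if t \<le> n then X t else ren (sw d e) (X t)"
  shows "\<forall>t<length w'. step M (X' t) (w'!t) (X' (Suc t))" and "length w' = length w"
    and "X' 0 = X 0" and "fst (X' (length w)) = fst (X (length w))" and "map fst w' = map fst w"
    and "\<And>t. t < n \<Longrightarrow> w'!t = w!t"
    and "\<And>t. n \<le> t \<Longrightarrow> t < length w \<Longrightarrow> w'!t = rp (sw d e) (w!t)"
proof -
  show len: "length w' = length w" using n unfolding w'_def by simp
  show nth1: "\<And>t. t < n \<Longrightarrow> w'!t = w!t" using n unfolding w'_def by (simp add: nth_append)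
  show nth2: "\<And>t. n \<le> t \<Longrightarrow> t < length w \<Longrightarrow> w'!t = rp (sw d e) (w!t)"
    using n unfolding w'_def by (simp add: nth_append)
  show "X' 0 = X 0" unfolding X'_def by simp
  show "fst (X' (length w)) = fst (X (length w))" unfolding X'_def ren_def by simp
  have "map fst (map (rp (sw d e)) ys) = map fst ys" for ys
    by (induct ys) (auto simp: rp_def)
  then show "map fst w' = map fst w" unfolding w'_def
    by (metis append_take_drop_id map_append)
  have "(\<lambda>i. sw d e ` snd (X n) i) = snd (X n)"
  proof
    fix i show "sw d e ` snd (X n) i = snd (X n) i" using same by (intro sw_image) blast
  qed
  then have fix_n: "ren (sw d e) (X n) = X n"
    unfolding ren_def by simp
  show "\<forall>t<length w'. step M (X' t) (w'!t) (X' (Suc t))"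
  proof (intro allI impI)
    fix t assume t: "t < length w'"
    show "step M (X' t) (w'!t) (X' (Suc t))"
    proof (cases "t < n")
      case True
      then show ?thesis using path t len nth1 unfolding X'_def by auto
    next
      case False
      have st: "step M (ren (sw d e) (X t)) (rp (sw d e) (w!t)) (ren (sw d e) (X (Suc t)))"
        using step_ren[OF _ sw_inj] path t len by metis
      have "X' t = ren (sw d e) (X t)" using False fix_n unfolding X'_def by auto
      moreover have "X' (Suc t) = ren (sw d e) (X (Suc t))" using False unfolding X'_def by auto
      ultimately show ?thesis using st nth2 False t len by auto
    qed
  qed
qed

theorem theorem1:
  fixes k :: nat and M :: "('q, nat) safa"
  assumes "k \<ge> 1"
    and "infinite (UNIV :: 'd::countable set)"
    and "wf_safa M {1..k+1}"
    and "nsets M = k"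
  shows "lang M {1..k+1} \<noteq> (L k :: (nat \<times> 'd) list set)"
proof
  assume eq: "lang M {1..k+1} = (L k :: (nat \<times> 'd) list set)"
  obtain f :: "nat \<Rightarrow> 'd" where inj: "inj f"
    using assms(2) unfolding infinite_iff_countable_subset by (elim exE conjE)
  define P where "P = (\<Pi>\<^sub>E b \<in> {..k+1}. Pow {..<k})"
  define N where "N = Suc (card P)"
  have Npos: "0 < N" unfolding N_def by simp
  define w :: "(nat \<times> 'd) list" where "w = map (\<lambda>t. (t div N + 1, f (t mod N))) [0..<(k+1)*N]"
  have len: "length w = (k+1)*N" unfolding w_def by simp
  have wnth: "\<And>t. t < (k+1)*N \<Longrightarrow> w!t = (t div N + 1, f (t mod N))" unfolding w_def by simp
  have wL: "w \<in> L k"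
  proof -
    have "set (map fst w) \<subseteq> {1..k+1}"
    proof
      fix x assume "x \<in> set (map fst w)"
      then obtain t where "t < (k+1)*N" "x = t div N + 1" unfolding w_def by auto
      moreover have "t div N < k+1" using \<open>t < (k+1)*N\<close> less_mult_imp_div_less by blast
      ultimately show "x \<in> {1..k+1}" by auto
    qed
    moreover have "sorted (map fst w)"
      unfolding w_def sorted_map by (auto simp: sorted_wrt_iff_nth_less div_le_mono)
    moreover have "distinct (map snd (filter (\<lambda>x. fst x = j) w))" for j
    proof -
      have "map snd (filter (\<lambda>x. fst x = j) w)
        = map (\<lambda>t. f (t mod N)) (filter (\<lambda>t. t div N + 1 = j) [0..<(k+1)*N])"
        unfolding w_def by (simp add: filter_map o_def)
      moreover have "inj_on (\<lambda>t. f (t mod N)) (set (filter (\<lambda>t. t div N + 1 = j) [0..<(k+1)*N]))"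
      proof (rule inj_onI)
        fix x y assume "x \<in> set (filter (\<lambda>t. t div N + 1 = j) [0..<(k+1)*N])"
          "y \<in> set (filter (\<lambda>t. t div N + 1 = j) [0..<(k+1)*N])" "f (x mod N) = f (y mod N)"
        then have "x div N = y div N" "x mod N = y mod N" using inj by (auto dest: injD)
        then show "x = y" by (metis div_mult_mod_eq)
      qed
      ultimately show ?thesis by (simp add: distinct_map)
    qed
    ultimately show ?thesis unfolding L_def by auto
  qed
  then have "accepts M w" using eq unfolding lang_def by blast
  then obtain q S where "runs M (init M, \<lambda>_. {}) w (q, S)" "q \<in> final M"
    unfolding accepts_def by blast
  then obtain X where X0: "X 0 = (init M, \<lambda>_. {})" and Xf: "fst (X (length w)) \<in> final M"
    and path: "\<forall>t<length w. step M (X t) (w!t) (X (Suc t))"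
    using runs_path by (metis fst_conv)
  have high: "t \<le> length w \<Longrightarrow> k \<le> i \<Longrightarrow> snd (X t) i = {}" for t i
  proof (induction t)
    case 0
    then show ?case using X0 by simp
  next
    case (Suc t)
    then show ?case using step_high[OF _ assms(3), of "X t" "w!t" "X (Suc t)" i] path assms(4) by auto
  qed
  define ty where "ty b x = {i. x \<in> snd (X (b*N)) i}" for b x
  have ty_sub: "b \<le> k+1 \<Longrightarrow> ty b x \<subseteq> {..<k}" for b x
  proof -
    assume "b \<le> k+1"
    then have "b*N \<le> length w" using len mult_le_mono1 by metis
    then show ?thesis unfolding ty_def using high by (auto simp: not_less[symmetric])
  qed
  define g where "g l = restrict (\<lambda>b. ty b (f l)) {..k+1}" for l
  have "g ` {..<N} \<subseteq> P" unfolding P_def g_def using ty_sub by (auto simp: subset_iff)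
  moreover have "finite P" unfolding P_def by (auto intro!: finite_PiE)
  ultimately have "card (g ` {..<N}) < card {..<N}"
    by (metis N_def card_lessThan card_mono le_imp_less_Suc)
  then have "\<not> inj_on g {..<N}" using card_image by fastforce
  then obtain l m where lm: "l < m" "m < N" "g l = g m"
    unfolding inj_on_def by (metis lessThan_iff linorder_neqE_nat)
  have tyeq: "b \<le> k+1 \<Longrightarrow> ty b (f l) = ty b (f m)" for b
    using lm(3) unfolding g_def by (metis atMost_iff restrict_apply')
  have divmod: "(b*N + r) div N = b" "(b*N + r) mod N = r" if "r < N" for b r
    using that by auto
  have mono: "ty b x \<subseteq> ty (Suc b) x" if "b \<le> k" for b x
  proof -
    have "Suc b * N \<le> length w" using len that mult_le_mono1 by (metis Suc_eq_plus1 Suc_le_mono)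
    then show ?thesis unfolding ty_def using path_mono[OF path, of "b*N" "Suc b * N"] by auto
  qed
  have key: "ty b (f l) \<noteq> ty (Suc b) (f l)" if b: "b \<le> k" for b
  proof
    assume eqty: "ty b (f l) = ty (Suc b) (f l)"
    define n where "n = b*N + m"
    have SbN: "Suc b * N \<le> length w" using len b mult_le_mono1 by (metis Suc_eq_plus1 Suc_le_mono)
    have n_len: "n < length w" using SbN lm unfolding n_def by simp
    have A: "f m \<in> snd (X n) i \<longleftrightarrow> i \<in> ty b (f m)" for i
    proof -
      have "f m \<notin> {snd (w!s) | s. b*N \<le> s \<and> s < n}"
      proof
        assume "f m \<in> {snd (w!s) | s. b*N \<le> s \<and> s < n}"
        then obtain s where s: "b*N \<le> s" "s < n" "f m = snd (w!s)" by blast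
        then obtain r where r: "s = b*N + r" "r < m" unfolding n_def by (metis add_less_cancel_left le_iff_add)
        have "s < (k+1)*N" using s n_len len by simp
        then have "snd (w!s) = f r" using wnth r divmod lm by simp
        then show False using s r inj by (auto dest: injD)
      qed
      then show ?thesis using path_mono[OF path, of "b*N" n i] n_len unfolding ty_def n_def by auto
    qed
    have B: "f l \<in> snd (X n) i \<longleftrightarrow> i \<in> ty (Suc b) (f l)" for i
    proof -
      have "f l \<notin> {snd (w!s) | s. n \<le> s \<and> s < Suc b * N}"
      proof
        assume "f l \<in> {snd (w!s) | s. n \<le> s \<and> s < Suc b * N}"
        then obtain s where s: "n \<le> s" "s < Suc b * N" "f l = snd (w!s)" by blast
        have "s = b*N + (s - b*N)" "m \<le> s - b*N" "s - b*N < N" using s unfolding n_def by auto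
        then obtain r where r: "s = b*N + r" "m \<le> r" "r < N" by blast
        have "s < (k+1)*N" using s(2) SbN len by linarith
        then have "snd (w!s) = f r" using wnth r divmod by simp
        then show False using s r inj lm by (auto dest: injD)
      qed
      moreover have "n \<le> Suc b * N" using lm unfolding n_def by simp
      ultimately show ?thesis using path_mono[OF path, of n "Suc b * N" i] SbN unfolding ty_def by blast
    qed
    have same: "\<forall>i. f l \<in> snd (X n) i \<longleftrightarrow> f m \<in> snd (X n) i"
      using A B eqty tyeq b by auto
    define w' where "w' = take n w @ map (rp (sw (f l) (f m))) (drop n w)"
    define X' where "X' = (\<lambda>t. if t \<le> n then X t else ren (sw (f l) (f m)) (X t))"
    note sp = swap_path[OF path n_len same, folded w'_def X'_def]
    have sp1: "\<forall>t<length w'. step M (X' t) (w'!t) (X' (Suc t))" using sp(1) unfolding X'_def .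
    have "runs M (X' 0) w' (X' (length w'))" by (rule path_runs[OF refl refl sp1])
    then have "runs M (init M, \<lambda>_. {}) w' (fst (X' (length w)), snd (X' (length w)))"
      using sp(2) X0 by (simp add: X'_def)
    then have "accepts M w'" unfolding accepts_def using sp(4) Xf unfolding X'_def by auto
    moreover have "set (map fst w') \<subseteq> {1..k+1}" using sp(5) wL unfolding L_def by simp
    ultimately have "w' \<in> L k" using eq unfolding lang_def by auto
    then have dist: "distinct (map snd (filter (\<lambda>x. fst x = b+1) w'))"
      using b unfolding L_def by auto
    define p where "p = b*N + l"
    have pn: "p < n" unfolding p_def n_def using lm by simp
    have "w'!p = (b+1, f l)" using sp(6)[OF pn] wnth[of p] pn n_len len divmod lm unfolding p_def by simp
    moreover have "w'!n = (b+1, f l)"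
      using sp(7)[of n] wnth[of n] n_len len divmod lm inj unfolding n_def rp_def sw_def by (auto dest: injD)
    ultimately have "\<not> distinct (map snd (filter (\<lambda>x. fst x = b+1) w'))"
      using nondistinct[of p n w'] pn n_len sp(2) by simp
    then show False using dist by simp
  qed
  have "b \<le> k+1 \<Longrightarrow> b \<le> card (ty b (f l))" for b
  proof (induction b)
    case 0 then show ?case by simp
  next
    case (Suc b)
    have "ty b (f l) \<subset> ty (Suc b) (f l)" using key mono Suc.prems by auto
    moreover have "finite (ty (Suc b) (f l))" using ty_sub[OF Suc.prems] finite_subset by blast
    ultimately have "card (ty b (f l)) < card (ty (Suc b) (f l))" by (rule psubset_card_mono[rotated])
    then show ?case using Suc by auto
  qed
  from this[of "k+1"] have "k+1 \<le> card (ty (k+1) (f l))" by simp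
  moreover have "card (ty (k+1) (f l)) \<le> k" using ty_sub[of "k+1"]
    by (metis card_lessThan card_mono finite_lessThan order_refl)
  ultimately show False by simp
qed

end
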